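(* Let $n,k$ be integers with $2<2k\le n$. Suppose that the integer program $( * )$ has a solution but no trivial solution, and let $(\mathsf{u},\mathsf{v}_+,\mathsf{v}_-,r,t)$ be a (necessarily nontrivial) solution of $( * )$. Then there is a homomorphism $K_{4r+2}\to \mathrm{Pet}(n,k)^{2r+1}$ (i.e., $\mathrm{Pet}(n,k)^{2r+1}$ contains a clique on $4r+2$ vertices).
   Context: For integers $n,k$ with $2<2k\le n$, the generalized Petersen graph $\mathrm{Pet}(n,k)$ has vertex set $\{u_0,\dots,u_{n-1}\}\cup\{v_0,\dots,v_{n-1}\}$ and edge set $\{u_iu_{i+1}\}\cup\{u_iv_i\}\cup\{v_iv_{i+k}\}$, indices modulo $n$. The integer program $( * )$ is: minimize $\mathsf{u}+\mathsf{v}_++\mathsf{v}_-$ over integers $\mathsf{u},\mathsf{v}_+,\mathsf{v}_-,r\ge 0$ and $t\in\mathbb{Z}$ subject to $\mathsf{u}+k(\mathsf{v}_+-\mathsf{v}_-)=tn$ and $\mathsf{u}+\mathsf{v}_++\mathsf{v}_-=2r+1$. A solution of $( * )$ is a minimizer $(\mathsf{u},\mathsf{v}_+,\mathsf{v}_-,r,t)$; it is trivial if $\mathsf{u}=0$ or $\mathsf{v}_++\mathsf{v}_-=0$, and nontrivial otherwise. For a graph $G$ and positive integer $m$, the power graph $G^m$ has vertex set $V(G)$, two distinct vertices being adjacent iff there is a walk of length exactly $m$ between them in $G$. A homomorphism $G\to H$ is a map $V(G)\to V(H)$ sending edges to edges. *)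

theory Defs
  imports Main
begin

text \<open>Graphs are given by a vertex set and an adjacency relation.
Vertices of Pet(n,k): (False, i) is u_i and (True, i) is v_i, for i < n.\<close>

type_synonym pvert = "bool \<times> nat"

definition pet_verts :: "nat \<Rightarrow> pvert set" where
  "pet_verts n = {(b, i). i < n}"

definition pet_edge :: "nat \<Rightarrow> nat \<Rightarrow> pvert \<Rightarrow> pvert \<Rightarrow> bool" where
  "pet_edge n k x y \<longleftrightarrow>
     (\<exists>i<n. (x = (False, i) \<and> y = (False, (i + 1) mod n))
          \<or> (x = (False, i) \<and> y = (True, i))
          \<or> (x = (True, i) \<and> y = (True, (i + k) mod n)))"

definition pet_adj :: "nat \<Rightarrow> nat \<Rightarrow> pvert \<Rightarrow> pvert \<Rightarrow> bool" where
  "pet_adj n k x y \<longleftrightarrow> pet_edge n k x y \<or> pet_edge n k y x"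

definition has_walk :: "'a set \<Rightarrow> ('a \<Rightarrow> 'a \<Rightarrow> bool) \<Rightarrow> nat \<Rightarrow> 'a \<Rightarrow> 'a \<Rightarrow> bool" where
  "has_walk V adj m x y \<longleftrightarrow>
     (\<exists>p :: nat \<Rightarrow> 'a. p 0 = x \<and> p m = y \<and> (\<forall>j\<le>m. p j \<in> V)
        \<and> (\<forall>j<m. adj (p j) (p (Suc j))))"

definition power_adj :: "'a set \<Rightarrow> ('a \<Rightarrow> 'a \<Rightarrow> bool) \<Rightarrow> nat \<Rightarrow> 'a \<Rightarrow> 'a \<Rightarrow> bool" where
  "power_adj V adj m x y \<longleftrightarrow> x \<in> V \<and> y \<in> V \<and> x \<noteq> y \<and> has_walk V adj m x y"

definition complete_hom :: "nat \<Rightarrow> 'a set \<Rightarrow> ('a \<Rightarrow> 'a \<Rightarrow> bool) \<Rightarrow> (nat \<Rightarrow> 'a) \<Rightarrow> bool" where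
  "complete_hom N V adj f \<longleftrightarrow>
     (\<forall>i<N. f i \<in> V) \<and> (\<forall>i<N. \<forall>j<N. i \<noteq> j \<longrightarrow> adj (f i) (f j))"

definition ip_feasible :: "nat \<Rightarrow> nat \<Rightarrow> nat \<Rightarrow> nat \<Rightarrow> nat \<Rightarrow> nat \<Rightarrow> int \<Rightarrow> bool" where
  "ip_feasible n k u vp vm r t \<longleftrightarrow>
     int u + int k * (int vp - int vm) = t * int n \<and> u + vp + vm = 2 * r + 1"

definition ip_solution :: "nat \<Rightarrow> nat \<Rightarrow> nat \<Rightarrow> nat \<Rightarrow> nat \<Rightarrow> nat \<Rightarrow> int \<Rightarrow> bool" where
  "ip_solution n k u vp vm r t \<longleftrightarrow> ip_feasible n k u vp vm r t \<and>
     (\<forall>u' vp' vm' r' t'. ip_feasible n k u' vp' vm' r' t' \<longrightarrow> u + vp + vm \<le> u' + vp' + vm')"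

definition ip_trivial :: "nat \<Rightarrow> nat \<Rightarrow> nat \<Rightarrow> bool" where
  "ip_trivial u vp vm \<longleftrightarrow> u = 0 \<or> vp + vm = 0"

end

theory Submission
  imports Defs
begin


lemma hw_refl: "x \<in> V \<Longrightarrow> has_walk V adj 0 x x"
  unfolding has_walk_def by (rule exI[of _ "\<lambda>_. x"]) auto

lemma hw_step: "x \<in> V \<Longrightarrow> y \<in> V \<Longrightarrow> adj x y \<Longrightarrow> has_walk V adj 1 x y"
  unfolding has_walk_def
  apply (rule exI[of _ "\<lambda>j. if j = 0 then x else y"])
  by (auto simp: le_Suc_eq)

lemma hw_trans:
  assumes "has_walk V adj m1 x y" "has_walk V adj m2 y z"
  shows "has_walk V adj (m1 + m2) x z"
proof -
  obtain p where p: "p 0 = x" "p m1 = y" "\<forall>j\<le>m1. p j \<in> V" "\<forall>j<m1. adj (p j) (p (Suc j))"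
    using assms(1) unfolding has_walk_def by blast
  obtain q where q: "q 0 = y" "q m2 = z" "\<forall>j\<le>m2. q j \<in> V" "\<forall>j<m2. adj (q j) (q (Suc j))"
    using assms(2) unfolding has_walk_def by blast
  define w where "w = (\<lambda>j. if j \<le> m1 then p j else q (j - m1))"
  have "w 0 = x" using p by (simp add: w_def)
  moreover have "w (m1 + m2) = z" using p q by (auto simp: w_def)
  moreover have "\<forall>j\<le>m1+m2. w j \<in> V" using p q by (auto simp: w_def)
  moreover have "\<forall>j<m1+m2. adj (w j) (w (Suc j))"
  proof (intro allI impI)
    fix j assume j: "j < m1 + m2"
    show "adj (w j) (w (Suc j))"
    proof (cases "j < m1")
      case True thus ?thesis using p by (auto simp: w_def)
    next
      case False
      then have "Suc j - m1 = Suc (j - m1)" by simp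
      moreover have "j - m1 < m2" using j False by simp
      ultimately show ?thesis using q False p(2)
        by (cases "j = m1") (auto simp: w_def)
    qed
  qed
  ultimately show ?thesis unfolding has_walk_def by blast
qed

lemma hw_sym:
  assumes "has_walk V adj m x y" "\<And>a b. adj a b \<Longrightarrow> adj b a"
  shows "has_walk V adj m y x"
proof -
  obtain p where p: "p 0 = x" "p m = y" "\<forall>j\<le>m. p j \<in> V" "\<forall>j<m. adj (p j) (p (Suc j))"
    using assms(1) unfolding has_walk_def by blast
  define w where "w = (\<lambda>j. p (m - j))"
  have "\<forall>j<m. adj (w j) (w (Suc j))"
  proof (intro allI impI)
    fix j assume "j < m"
    then have "adj (p (m - Suc j)) (p (Suc (m - Suc j)))" using p(4) by simp
    moreover have "Suc (m - Suc j) = m - j" using \<open>j < m\<close> by simp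
    ultimately show "adj (w j) (w (Suc j))" using assms(2) by (simp add: w_def)
  qed
  moreover have "w 0 = y" "w m = x" using p by (auto simp: w_def)
  moreover have "\<forall>j\<le>m. w j \<in> V" using p by (auto simp: w_def)
  ultimately show ?thesis unfolding has_walk_def by blast
qed




lemma pet_adj_sym: "pet_adj n k x y \<Longrightarrow> pet_adj n k y x"
  unfolding pet_adj_def by blast

locale PS =
  fixes n k :: nat
  assumes npos: "0 < n"
begin

definition Uv :: "int \<Rightarrow> pvert" where "Uv z = (False, nat (z mod int n))"
definition Vv :: "int \<Rightarrow> pvert" where "Vv z = (True, nat (z mod int n))"
abbreviation W where "W m x y \<equiv> has_walk (pet_verts n) (pet_adj n k) m x y"

lemma U_in: "Uv z \<in> pet_verts n" and V_in: "Vv z \<in> pet_verts n"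
  using npos by (auto simp: Uv_def Vv_def pet_verts_def nat_less_iff)

lemma nat_mod_help: "nat ((z + c) mod int n) = (nat (z mod int n) + nat c) mod n" if "c \<ge> 0" for z c
proof -
  have "int ((nat (z mod int n) + nat c) mod n) = (z mod int n + c) mod int n"
    using npos that by (simp add: zmod_int)
  also have "\<dots> = (z + c) mod int n" by (simp add: mod_add_left_eq)
  finally show ?thesis by (metis nat_int)
qed

lemma adjUU: "pet_adj n k (Uv z) (Uv (z + 1))"
  unfolding pet_adj_def pet_edge_def using npos
  by (intro disjI1 exI[of _ "nat (z mod int n)"]) (auto simp: Uv_def nat_mod_help[of 1, simplified] nat_less_iff)

lemma adjUV: "pet_adj n k (Uv z) (Vv z)"
  unfolding pet_adj_def pet_edge_def using npos
  by (intro disjI1 exI[of _ "nat (z mod int n)"]) (auto simp: Uv_def Vv_def nat_less_iff)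

lemma adjVV: "pet_adj n k (Vv z) (Vv (z + int k))"
  unfolding pet_adj_def pet_edge_def using npos
  by (intro disjI1 exI[of _ "nat (z mod int n)"]) (auto simp: Vv_def nat_mod_help[of "int k", simplified] nat_less_iff)

lemma Wstep: "pet_adj n k x y \<Longrightarrow> x \<in> pet_verts n \<Longrightarrow> y \<in> pet_verts n \<Longrightarrow> W 1 x y"
  by (rule hw_step)

lemma Wsym: "W m x y \<Longrightarrow> W m y x" using hw_sym pet_adj_sym by metis

lemma urun_f: "W p (Uv x) (Uv (x + int p))"
proof (induction p)
  case 0 then show ?case by simp (rule hw_refl, rule U_in)
next
  case (Suc p)
  have "W 1 (Uv (x + int p)) (Uv (x + int p + 1))" by (rule Wstep[OF adjUU U_in U_in])
  from hw_trans[OF Suc this] show ?case by (simp add: algebra_simps)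
qed

lemma vrun_f: "W q (Vv x) (Vv (x + int q * int k))"
proof (induction q)
  case 0 then show ?case by simp (rule hw_refl, rule V_in)
next
  case (Suc q)
  have "W 1 (Vv (x + int q * int k)) (Vv (x + int q * int k + int k))" by (rule Wstep[OF adjVV V_in V_in])
  from hw_trans[OF Suc this] show ?case by (simp add: algebra_simps)
qed

lemma urun: assumes "e = 1 \<or> e = -1" shows "W p (Uv x) (Uv (x + e * int p))"
  using assms
proof
  assume "e = 1" thus ?thesis using urun_f by simp
next
  assume "e = -1"
  have "W p (Uv (x - int p)) (Uv (x - int p + int p))" by (rule urun_f)
  then show ?thesis using \<open>e = -1\<close> Wsym by simp
qed

lemma vrun: assumes "e = 1 \<or> e = -1" shows "W q (Vv x) (Vv (x + e * int q * int k))"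
  using assms
proof
  assume "e = 1" thus ?thesis using vrun_f by simp
next
  assume "e = -1"
  have "W q (Vv (x - int q * int k)) (Vv (x - int q * int k + int q * int k))" by (rule vrun_f)
  then show ?thesis using \<open>e = -1\<close> Wsym by simp
qed

lemma spUV: "W 1 (Uv x) (Vv x)" by (rule Wstep[OF adjUV U_in V_in])
lemma spVU: "W 1 (Vv x) (Uv x)" using spUV Wsym by blast

lemma U_cong: "int n dvd (z - z') \<Longrightarrow> Uv z = Uv z'"
  unfolding Uv_def by (simp add: mod_eq_dvd_iff[symmetric])
lemma V_cong: "int n dvd (z - z') \<Longrightarrow> Vv z = Vv z'"
  unfolding Vv_def by (simp add: mod_eq_dvd_iff[symmetric])
lemma U_eq: "Uv z = Uv z' \<Longrightarrow> int n dvd (z - z')"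
  unfolding Uv_def using npos by (simp add: mod_eq_dvd_iff[symmetric] eq_nat_nat_iff)
lemma V_eq: "Vv z = Vv z' \<Longrightarrow> int n dvd (z - z')"
  unfolding Vv_def using npos by (simp add: mod_eq_dvd_iff[symmetric] eq_nat_nat_iff)
lemma UV_ne: "Uv z \<noteq> Vv z'" by (simp add: Uv_def Vv_def)

lemma pad: assumes "W m x y" "y \<in> pet_verts n" shows "W (m + 2 * j) x y"
proof (induction j)
  case 0 then show ?case using assms by simp
next
  case (Suc j)
  obtain b i where y: "y = (b, i)" "i < n" using assms(2) by (auto simp: pet_verts_def)
  define y' where "y' = (\<not> b, i)"
  have a: "pet_adj n k y y'" unfolding pet_adj_def pet_edge_def y y'_def using y(2)
    by (cases b) auto
  have y'in: "y' \<in> pet_verts n" using y by (simp add: y'_def pet_verts_def)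
  have "W 1 y y'" by (rule Wstep[OF a assms(2) y'in])
  moreover have "W 1 y' y" by (rule Wstep[OF pet_adj_sym[OF a] y'in assms(2)])
  ultimately have "W (1+1) y y" by (rule hw_trans)
  from hw_trans[OF Suc this] show ?case by simp
qed

lemma pad_odd: assumes "W m x y" "y \<in> pet_verts n" "odd m" "odd L" "m \<le> L" shows "W L x y"
proof -
  obtain j where "L = m + 2 * j" using assms(3-5)
    by (metis add_diff_inverse_nat dvd_diff_nat even_two_times_div_two le_add_diff_inverse odd_add not_le)
  then show ?thesis using pad[OF assms(1,2)] by simp
qed

lemma sUVU: assumes "e1 = 1 \<or> e1 = -1" "e2 = 1 \<or> e2 = -1" "e3 = 1 \<or> e3 = -1"
  and "int n dvd (x + e1 * int p1 + e2 * int q * int k + e3 * int p2 - y)"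
  shows "W (p1 + 1 + q + 1 + p2) (Uv x) (Uv y)"
proof -
  let ?x1 = "x + e1 * int p1" let ?x2 = "?x1 + e2 * int q * int k"
  have "W (p1 + 1 + q + 1 + p2) (Uv x) (Uv (?x2 + e3 * int p2))"
    by (intro hw_trans[OF hw_trans[OF hw_trans[OF hw_trans[OF urun[OF assms(1)] spUV] vrun[OF assms(2)]] spVU] urun[OF assms(3)]])
  moreover have "Uv (?x2 + e3 * int p2) = Uv y" using assms(4) by (intro U_cong) (simp add: algebra_simps)
  ultimately show ?thesis by simp
qed

lemma sVUV: assumes "e1 = 1 \<or> e1 = -1" "e2 = 1 \<or> e2 = -1" "e3 = 1 \<or> e3 = -1"
  and "int n dvd (x + e1 * int q1 * int k + e2 * int p + e3 * int q2 * int k - y)"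
  shows "W (q1 + 1 + p + 1 + q2) (Vv x) (Vv y)"
proof -
  let ?x1 = "x + e1 * int q1 * int k" let ?x2 = "?x1 + e2 * int p"
  have "W (q1 + 1 + p + 1 + q2) (Vv x) (Vv (?x2 + e3 * int q2 * int k))"
    by (intro hw_trans[OF hw_trans[OF hw_trans[OF hw_trans[OF vrun[OF assms(1)] spVU] urun[OF assms(2)]] spUV] vrun[OF assms(3)]])
  moreover have "Vv (?x2 + e3 * int q2 * int k) = Vv y" using assms(4) by (intro V_cong) (simp add: algebra_simps)
  ultimately show ?thesis by simp
qed

lemma sUV: assumes "e1 = 1 \<or> e1 = -1" "e2 = 1 \<or> e2 = -1"
  and "int n dvd (x + e1 * int p + e2 * int q * int k - y)"
  shows "W (p + 1 + q) (Uv x) (Vv y)"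
proof -
  let ?x1 = "x + e1 * int p"
  have "W (p + 1 + q) (Uv x) (Vv (?x1 + e2 * int q * int k))"
    by (intro hw_trans[OF hw_trans[OF urun[OF assms(1)] spUV] vrun[OF assms(2)]])
  moreover have "Vv (?x1 + e2 * int q * int k) = Vv y" using assms(3) by (intro V_cong) (simp add: algebra_simps)
  ultimately show ?thesis by simp
qed

lemma sVU: assumes "e1 = 1 \<or> e1 = -1" "e2 = 1 \<or> e2 = -1"
  and "int n dvd (x + e1 * int q * int k + e2 * int p - y)"
  shows "W (q + 1 + p) (Vv x) (Uv y)"
proof -
  let ?x1 = "x + e1 * int q * int k"
  have "W (q + 1 + p) (Vv x) (Uv (?x1 + e2 * int p))"
    by (intro hw_trans[OF hw_trans[OF vrun[OF assms(1)] spVU] urun[OF assms(2)]])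
  moreover have "Uv (?x1 + e2 * int p) = Uv y" using assms(3) by (intro U_cong) (simp add: algebra_simps)
  ultimately show ?thesis by simp
qed

lemma sVUVU: assumes "e1 = 1 \<or> e1 = -1" "e2 = 1 \<or> e2 = -1"
  and "int n dvd (x + e1 * int p + e2 * int q * int k - y)"
  shows "W (1 + p + 1 + q + 1) (Vv x) (Uv y)"
proof -
  have "W (1 + (p + 1 + q) + 1) (Vv x) (Uv y)"
    by (intro hw_trans[OF hw_trans[OF spVU sUV[OF assms]] spVU])
  then show ?thesis by (simp add: add.assoc)
qed

end



locale PS2 = PS +
  fixes a b r :: nat and S :: int
  assumes S: "S = 1 \<or> S = -1"
    and rel: "int n dvd (int a + S * int b * int k)"
    and a1: "1 \<le> a" and b1: "1 \<le> b" and Lab: "a + b = 2 * r + 1"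
    and minf: "\<And>c d. 0 \<le> c \<Longrightarrow> int n dvd (c + int k * d) \<Longrightarrow> odd (c + \<bar>d\<bar>) \<Longrightarrow> int (2 * r + 1) \<le> c + \<bar>d\<bar>"
begin

abbreviation "L \<equiv> 2 * r + 1"

lemma pL: "even a = odd b"
proof -
  have "odd (a + b)" unfolding Lab by simp
  then show ?thesis by auto
qed

lemma mS: "- S = 1 \<or> - S = -1" using S by auto
lemma p1: "(1::int) = 1 \<or> (1::int) = -1" by simp
lemma m1: "(-1::int) = 1 \<or> (-1::int) = -1" by simp

lemma dvdE: "X = c * (int a + S * int b * int k) \<Longrightarrow> int n dvd X"
  using rel by simp

lemma fin: "W l x y \<Longrightarrow> odd l \<Longrightarrow> l \<le> L \<Longrightarrow> y \<in> pet_verts n \<Longrightarrow> W L x y"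
  using pad_odd by simp

lemma absS: "\<bar>S * int j\<bar> = int j" using S by auto

lemma minf2: "0 \<le> c \<Longrightarrow> int n dvd (c + int k * (S * int j)) \<Longrightarrow> odd (c + int j) \<Longrightarrow> c + int j < int L \<Longrightarrow> False"
  using minf[of c "S * int j"] by (simp add: absS)

lemma minf3: "int n dvd (int c + int k * (S * int j)) \<Longrightarrow> odd (c + j) \<Longrightarrow> c + j < L \<Longrightarrow> False"
  using minf2[of "int c" j] by (metis int_ops(5) of_nat_0_le_iff of_nat_less_iff even_of_nat)

lemma dist_lin: assumes "i < m" "m \<le> a" "int n dvd (int m - int i)" shows False
proof (cases "odd (m - i)")
  case True
  have "int n dvd (int (m - i) + int k * (S * int 0))" using assms by (simp add: of_nat_diff)
  moreover have "odd (m - i + 0)" using True by simp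
  moreover have "m - i + 0 < L" using assms Lab b1 by simp
  ultimately show False by (rule minf3)
next
  case False
  have "int n dvd (int (a - (m - i)) + int k * (S * int b))"
    using dvd_diff[OF rel assms(3)] assms by (simp add: of_nat_diff algebra_simps)
  moreover have "odd (a - (m - i) + b)" using False assms(1,2) pL by auto
  moreover have "a - (m - i) + b < L" using False assms(1,2) Lab by linarith
  ultimately show False using minf3 by blast
qed

lemma dist_v: assumes "j < l" "l \<le> b" "int n dvd (S * int (l - j) * int k)" shows False
proof (cases "odd (l - j)")
  case True
  have "int n dvd (int 0 + int k * (S * int (l - j)))" using assms by (simp add: algebra_simps)
  moreover have "odd (0 + (l - j))" using True by simp
  moreover have "0 + (l - j) < L" using assms Lab a1 by simp
  ultimately show False by (rule minf3)
next
  case False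
  have "int a + S * int b * int k - S * int (l - j) * int k = int a + int k * (S * int (b - (l - j)))"
    using assms by (simp add: of_nat_diff algebra_simps)
  then have "int n dvd (int a + int k * (S * int (b - (l - j))))"
    using dvd_diff[OF rel assms(3)] by metis
  moreover have "odd (a + (b - (l - j)))" using False assms(1,2) pL by auto
  moreover have "a + (b - (l - j)) < L" using False assms(1,2) Lab by linarith
  ultimately show False using minf3 by blast
qed

lemma dist_m: assumes "i \<le> a" "j \<le> b" "1 \<le> a - i + j" "1 \<le> i + b - j"
  "int n dvd (int a + S * int j * int k - int i)" shows False
proof (cases "odd (a - i + j)")
  case True
  have "int n dvd (int (a - i) + int k * (S * int j))" using assms by (simp add: of_nat_diff algebra_simps)
  moreover have "a - i + j < L" using assms Lab by simp
  ultimately show False using minf3 True by blast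
next
  case False
  have "int a + S * int b * int k - (int a + S * int j * int k - int i) = int i + int k * (S * int (b - j))"
    using assms by (simp add: of_nat_diff algebra_simps)
  then have "int n dvd (int i + int k * (S * int (b - j)))"
    using dvd_diff[OF rel assms(5)] by metis
  moreover have "odd (i + (b - j))" using False assms(1-4) pL by auto
  moreover have "i + (b - j) < L" using False assms(1-4) Lab by linarith
  ultimately show False using minf3 by blast
qed

end



lemma evge: "even (x::nat) \<Longrightarrow> odd c \<Longrightarrow> c \<le> x \<Longrightarrow> c + 1 \<le> x" by (cases "x = c") auto
lemma ev2: "i < m \<Longrightarrow> even (m - i) \<Longrightarrow> i + 2 \<le> (m::nat)" by (cases "m = Suc i") auto
lemma odge: "odd (x::nat) \<Longrightarrow> even c \<Longrightarrow> c \<le> x \<Longrightarrow> c + 1 \<le> x" by (cases "x = c") auto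

context PS2 begin

lemma w00: assumes "i < m" "m \<le> a" shows "W L (Uv (int i)) (Uv (int m))"
proof (cases "odd (m - i)")
  case True
  have "W (m - i) (Uv (int i)) (Uv (int i + 1 * int (m - i)))" by (rule urun[OF p1])
  then have w: "W (m - i) (Uv (int i)) (Uv (int m))" using assms by (simp add: of_nat_diff)
  show ?thesis by (rule fin[OF w True _ U_in]) (use assms Lab in linarith)
next
  case False
  have w: "W (i + 1 + b + 1 + (a - m)) (Uv (int i)) (Uv (int m))"
    by (rule sUVU[OF m1 mS m1], rule dvdE[of _ "-1"]) (use assms in \<open>simp add: of_nat_diff algebra_simps\<close>)
  have h: "i + 2 \<le> m" using ev2[of i m] False assms by simp
  show ?thesis by (rule fin[OF w _ _ U_in]) (use h False assms pL Lab in auto)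
qed

lemma w11: assumes "j < l" "l \<le> b"
  shows "W L (Vv (int a + S * int j * int k)) (Vv (int a + S * int l * int k))"
proof (cases "odd (l - j)")
  case True
  have "W (l - j) (Vv (int a + S * int j * int k)) (Vv (int a + S * int j * int k + S * int (l - j) * int k))"
    by (rule vrun[OF S])
  then have w: "W (l - j) (Vv (int a + S * int j * int k)) (Vv (int a + S * int l * int k))"
    using assms by (simp add: of_nat_diff algebra_simps)
  show ?thesis by (rule fin[OF w True _ V_in]) (use assms Lab in linarith)
next
  case False
  have w: "W (j + 1 + a + 1 + (b - l)) (Vv (int a + S * int j * int k)) (Vv (int a + S * int l * int k))"
    by (rule sVUV[OF mS m1 mS], rule dvdE[of _ "-1"]) (use assms in \<open>simp add: of_nat_diff algebra_simps\<close>)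
  have h: "j + 2 \<le> l" using ev2[of j l] False assms by simp
  show ?thesis by (rule fin[OF w _ _ V_in]) (use h False assms pL Lab in auto)
qed

lemma w01: assumes "i \<le> a" "j \<le> b"
  shows "W L (Uv (int i)) (Vv (int a + S * int j * int k))"
proof (cases "odd ((a - i) + 1 + j)")
  case True
  have w: "W ((a - i) + 1 + j) (Uv (int i)) (Vv (int a + S * int j * int k))"
    by (rule sUV[OF p1 S], rule dvdE[of _ 0]) (use assms in \<open>simp add: of_nat_diff algebra_simps\<close>)
  have h: "\<not> (i = 0 \<and> j = b)" using True pL assms by auto
  show ?thesis by (rule fin[OF w True _ V_in]) (use h assms Lab in linarith)
next
  case False
  have w: "W (i + 1 + (b - j)) (Uv (int i)) (Vv (int a + S * int j * int k))"
    by (rule sUV[OF m1 mS], rule dvdE[of _ "-1"]) (use assms in \<open>simp add: of_nat_diff algebra_simps\<close>)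
  have h: "\<not> (i = a \<and> j = 0)" using False by (cases "j = 0") auto
  show ?thesis by (rule fin[OF w _ _ V_in]) (use h False assms pL Lab in auto)
qed

lemma w02: assumes "m \<le> a" "1 \<le> i" "i < a" shows "W L (Vv (int i)) (Uv (int m))"
proof (cases "i \<le> m")
  case True
  show ?thesis
  proof (cases "even (m - i)")
    case True
    have w: "W (0 + 1 + (m - i)) (Vv (int i)) (Uv (int m))"
      by (rule sVU[OF p1 p1], rule dvdE[of _ 0]) (use assms \<open>i \<le> m\<close> in \<open>simp add: of_nat_diff algebra_simps\<close>)
    show ?thesis by (rule fin[OF w _ _ U_in]) (use True assms \<open>i \<le> m\<close> Lab in auto)
  next
    case False
    have w: "W (b + 1 + (a + i - m)) (Vv (int i)) (Uv (int m))"
      by (rule sVU[OF mS m1], rule dvdE[of _ "-1"]) (use assms in \<open>simp add: of_nat_diff algebra_simps\<close>)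
    have h: "i < m" using False \<open>i \<le> m\<close> by (cases "i = m") auto
    show ?thesis by (rule fin[OF w _ _ U_in]) (use h False assms pL Lab in auto)
  qed
next
  case False
  show ?thesis
  proof (cases "even (i - m)")
    case True
    have w: "W (0 + 1 + (i - m)) (Vv (int i)) (Uv (int m))"
      by (rule sVU[OF p1 m1], rule dvdE[of _ 0]) (use assms False in \<open>simp add: of_nat_diff algebra_simps\<close>)
    show ?thesis by (rule fin[OF w _ _ U_in]) (use True assms False Lab in auto)
  next
    case odd: False
    have w: "W (b + 1 + (a - i + m)) (Vv (int i)) (Uv (int m))"
      by (rule sVU[OF S p1], rule dvdE[of _ 1]) (use assms in \<open>simp add: of_nat_diff algebra_simps\<close>)
    show ?thesis by (rule fin[OF w _ _ U_in]) (use odd False assms pL Lab in auto)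
  qed
qed

lemma w03: assumes "m \<le> a" "1 \<le> j" "j < b"
  shows "W L (Uv (int a + S * int j * int k)) (Uv (int m))"
proof (cases "odd (0 + 1 + j + 1 + (a - m))")
  case True
  have w: "W (0 + 1 + j + 1 + (a - m)) (Uv (int a + S * int j * int k)) (Uv (int m))"
    by (rule sUVU[OF p1 mS m1], rule dvdE[of _ 0]) (use assms in \<open>simp add: of_nat_diff algebra_simps\<close>)
  have "even (1 + (b - j) + 1 + m)" using True pL assms by auto
  from evge[OF this, of 3] have h: "4 \<le> 1 + (b - j) + 1 + m" using assms by simp
  show ?thesis by (rule fin[OF w True _ U_in]) (use h assms Lab in linarith)
next
  case False
  have w: "W (0 + 1 + (b - j) + 1 + m) (Uv (int a + S * int j * int k)) (Uv (int m))"
    by (rule sUVU[OF p1 S p1], rule dvdE[of _ 1]) (use assms in \<open>simp add: of_nat_diff algebra_simps\<close>)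
  have "odd (0 + 1 + (b - j) + 1 + m)" using False pL assms by auto
  moreover have "4 \<le> 0 + 1 + j + 1 + (a - m)" using evge[of "0 + 1 + j + 1 + (a - m)" 3] False assms by simp
  ultimately show ?thesis using fin[OF w _ _ U_in] assms Lab by linarith
qed


lemma w12: assumes "j \<le> b" "1 \<le> i" "i < a"
  shows "W L (Vv (int i)) (Vv (int a + S * int j * int k))"
proof (cases "odd (0 + 1 + (a - i) + 1 + j)")
  case True
  have w: "W (0 + 1 + (a - i) + 1 + j) (Vv (int i)) (Vv (int a + S * int j * int k))"
    by (rule sVUV[OF p1 p1 S], rule dvdE[of _ 0]) (use assms in \<open>simp add: of_nat_diff algebra_simps\<close>)
  have "even (1 + i + 1 + (b - j))" using True pL assms by auto
  from evge[OF this, of 3] have h: "4 \<le> 1 + i + 1 + (b - j)" using assms by simp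
  show ?thesis by (rule fin[OF w True _ V_in]) (use h assms Lab in linarith)
next
  case False
  have w: "W (0 + 1 + i + 1 + (b - j)) (Vv (int i)) (Vv (int a + S * int j * int k))"
    by (rule sVUV[OF p1 m1 mS], rule dvdE[of _ "-1"]) (use assms in \<open>simp add: of_nat_diff algebra_simps\<close>)
  have "odd (0 + 1 + i + 1 + (b - j))" using False pL assms by auto
  moreover have "4 \<le> 0 + 1 + (a - i) + 1 + j" using evge[of "0 + 1 + (a - i) + 1 + j" 3] False assms by simp
  ultimately show ?thesis using fin[OF w _ _ V_in] assms Lab by linarith
qed

lemma w13: assumes "l \<le> b" "1 \<le> j" "j < b"
  shows "W L (Uv (int a + S * int j * int k)) (Vv (int a + S * int l * int k))"
proof (cases "j \<le> l")
  case True
  show ?thesis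
  proof (cases "even (l - j)")
    case True
    have w: "W (0 + 1 + (l - j)) (Uv (int a + S * int j * int k)) (Vv (int a + S * int l * int k))"
      by (rule sUV[OF p1 S], rule dvdE[of _ 0]) (use assms \<open>j \<le> l\<close> in \<open>simp add: of_nat_diff algebra_simps\<close>)
    show ?thesis by (rule fin[OF w _ _ V_in]) (use True assms \<open>j \<le> l\<close> Lab in auto)
  next
    case False
    have w: "W (a + 1 + (b + j - l)) (Uv (int a + S * int j * int k)) (Vv (int a + S * int l * int k))"
      by (rule sUV[OF m1 mS], rule dvdE[of _ "-1"]) (use assms in \<open>simp add: of_nat_diff algebra_simps\<close>)
    have h: "j < l" using False \<open>j \<le> l\<close> by (cases "j = l") auto
    show ?thesis by (rule fin[OF w _ _ V_in]) (use h False assms pL Lab in auto)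
  qed
next
  case False
  show ?thesis
  proof (cases "even (j - l)")
    case True
    have w: "W (0 + 1 + (j - l)) (Uv (int a + S * int j * int k)) (Vv (int a + S * int l * int k))"
      by (rule sUV[OF p1 mS], rule dvdE[of _ 0]) (use assms False in \<open>simp add: of_nat_diff algebra_simps\<close>)
    show ?thesis by (rule fin[OF w _ _ V_in]) (use True assms False Lab in auto)
  next
    case odd: False
    have w: "W (a + 1 + (b - j + l)) (Uv (int a + S * int j * int k)) (Vv (int a + S * int l * int k))"
      by (rule sUV[OF p1 S], rule dvdE[of _ 1]) (use assms in \<open>simp add: of_nat_diff algebra_simps\<close>)
    show ?thesis by (rule fin[OF w _ _ V_in]) (use odd False assms pL Lab in auto)
  qed
qed

lemma w22: assumes "1 \<le> i" "i < m" "m < a" shows "W L (Vv (int i)) (Vv (int m))"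
proof (cases "odd (m - i)")
  case True
  have w: "W (0 + 1 + (m - i) + 1 + 0) (Vv (int i)) (Vv (int m))"
    by (rule sVUV[OF p1 p1 p1], rule dvdE[of _ 0]) (use assms in \<open>simp add: of_nat_diff algebra_simps\<close>)
  show ?thesis by (rule fin[OF w _ _ V_in]) (use True assms Lab in auto)
next
  case False
  have w: "W (b + 1 + (a + i - m) + 1 + 0) (Vv (int i)) (Vv (int m))"
    by (rule sVUV[OF mS m1 p1], rule dvdE[of _ "-1"]) (use assms in \<open>simp add: of_nat_diff algebra_simps\<close>)
  have h: "i + 2 \<le> m" using ev2[of i m] False assms by simp
  show ?thesis by (rule fin[OF w _ _ V_in]) (use h False assms pL Lab in auto)
qed

lemma w33: assumes "1 \<le> j" "j < l" "l < b"
  shows "W L (Uv (int a + S * int j * int k)) (Uv (int a + S * int l * int k))"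
proof (cases "odd (l - j)")
  case True
  have w: "W (0 + 1 + (l - j) + 1 + 0) (Uv (int a + S * int j * int k)) (Uv (int a + S * int l * int k))"
    by (rule sUVU[OF p1 S p1], rule dvdE[of _ 0]) (use assms in \<open>simp add: of_nat_diff algebra_simps\<close>)
  show ?thesis by (rule fin[OF w _ _ U_in]) (use True assms Lab in auto)
next
  case False
  have w: "W (a + 1 + (b + j - l) + 1 + 0) (Uv (int a + S * int j * int k)) (Uv (int a + S * int l * int k))"
    by (rule sUVU[OF m1 mS p1], rule dvdE[of _ "-1"]) (use assms in \<open>simp add: of_nat_diff algebra_simps\<close>)
  have h: "j + 2 \<le> l" using ev2[of j l] False assms by simp
  show ?thesis by (rule fin[OF w _ _ U_in]) (use h False assms pL Lab in auto)
qed

lemma w23: assumes "1 \<le> i" "i < a" "1 \<le> j" "j < b"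
  shows "W L (Vv (int i)) (Uv (int a + S * int j * int k))"
proof (cases "odd (1 + (a - i) + 1 + j + 1)")
  case True
  have w: "W (1 + (a - i) + 1 + j + 1) (Vv (int i)) (Uv (int a + S * int j * int k))"
    by (rule sVUVU[OF p1 S], rule dvdE[of _ 0]) (use assms in \<open>simp add: of_nat_diff algebra_simps\<close>)
  have "even (1 + i + 1 + (b - j) + 1)" using True pL assms by auto
  from evge[OF this, of 5] have h: "6 \<le> 1 + i + 1 + (b - j) + 1" using assms by simp
  show ?thesis by (rule fin[OF w True _ U_in]) (use h assms Lab in linarith)
next
  case False
  have w: "W (1 + i + 1 + (b - j) + 1) (Vv (int i)) (Uv (int a + S * int j * int k))"
    by (rule sVUVU[OF m1 mS], rule dvdE[of _ "-1"]) (use assms in \<open>simp add: of_nat_diff algebra_simps\<close>)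
  have "odd (1 + i + 1 + (b - j) + 1)" using False pL assms by auto
  moreover have "6 \<le> 1 + (a - i) + 1 + j + 1" using evge[of "1 + (a - i) + 1 + j + 1" 5] False assms by simp
  ultimately show ?thesis using fin[OF w _ _ U_in] assms Lab by linarith
qed

end



lemma dvd_sym_diff: "(d::int) dvd (x - y) \<Longrightarrow> d dvd (y - x)"
  by (metis dvd_minus_iff minus_diff_eq)

context PS2 begin

definition cv :: "nat \<Rightarrow> nat \<Rightarrow> pvert" where
  "cv c i = (if c = 0 then Uv (int i) else if c = 1 then Vv (int a + S * int i * int k)
            else if c = 2 then Vv (int i) else Uv (int a + S * int i * int k))"

definition valid :: "nat \<Rightarrow> nat \<Rightarrow> bool" where
  "valid c i \<longleftrightarrow> (c = 0 \<and> i \<le> a) \<or> (c = 1 \<and> i \<le> b) \<or> (c = 2 \<and> 1 \<le> i \<and> i < a) \<or> (c = 3 \<and> 1 \<le> i \<and> i < b)"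

lemma cv_in: "cv c i \<in> pet_verts n" by (simp add: cv_def U_in V_in)

lemma same0: assumes "i < j" "j \<le> a" shows "Uv (int i) \<noteq> Uv (int j) \<and> W L (Uv (int i)) (Uv (int j))"
  using w00[OF assms] dist_lin[OF assms] U_eq dvd_sym_diff by blast

lemma same2: assumes "1 \<le> i" "i < j" "j < a" shows "Vv (int i) \<noteq> Vv (int j) \<and> W L (Vv (int i)) (Vv (int j))"
proof -
  have "Vv (int i) \<noteq> Vv (int j)"
  proof
    assume "Vv (int i) = Vv (int j)"
    then have "int n dvd (int j - int i)" using V_eq dvd_sym_diff by blast
    then show False using dist_lin[of i j] assms by simp
  qed
  then show ?thesis using w22[OF assms] by blast
qed

lemma vdiff: "j < l \<Longrightarrow> (int a + S * int j * int k) - (int a + S * int l * int k) = - (S * int (l - j) * int k)"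
  by (simp add: of_nat_diff algebra_simps)

lemma same1: assumes "j < l" "l \<le> b"
  shows "Vv (int a + S * int j * int k) \<noteq> Vv (int a + S * int l * int k) \<and>
         W L (Vv (int a + S * int j * int k)) (Vv (int a + S * int l * int k))"
proof -
  have "Vv (int a + S * int j * int k) \<noteq> Vv (int a + S * int l * int k)"
  proof
    assume "Vv (int a + S * int j * int k) = Vv (int a + S * int l * int k)"
    then have "int n dvd (- (S * int (l - j) * int k))" using V_eq vdiff[OF assms(1)] by metis
    then show False using dist_v[OF assms] by simp
  qed
  then show ?thesis using w11[OF assms] by blast
qed

lemma same3: assumes "1 \<le> j" "j < l" "l < b"
  shows "Uv (int a + S * int j * int k) \<noteq> Uv (int a + S * int l * int k) \<and>
         W L (Uv (int a + S * int j * int k)) (Uv (int a + S * int l * int k))"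
proof -
  have "Uv (int a + S * int j * int k) \<noteq> Uv (int a + S * int l * int k)"
  proof
    assume "Uv (int a + S * int j * int k) = Uv (int a + S * int l * int k)"
    then have "int n dvd (- (S * int (l - j) * int k))" using U_eq vdiff[OF assms(2)] by metis
    then show False using dist_v[of j l] assms by simp
  qed
  then show ?thesis using w33[OF assms] by blast
qed

lemma pair_le: assumes "valid c i" "valid d j" "c \<le> d" "(c, i) \<noteq> (d, j)"
  shows "cv c i \<noteq> cv d j \<and> W L (cv c i) (cv d j)"
proof -
  consider "c = 0" "d = 0" | "c = 0" "d = 1" | "c = 0" "d = 2" | "c = 0" "d = 3"
    | "c = 1" "d = 1" | "c = 1" "d = 2" | "c = 1" "d = 3" | "c = 2" "d = 2" | "c = 2" "d = 3"
    | "c = 3" "d = 3"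
    using assms(1-3) unfolding valid_def by fastforce
  then show ?thesis
  proof cases
    case 1
    then have v: "i \<le> a" "j \<le> a" "i \<noteq> j" using assms unfolding valid_def by auto
    show ?thesis
    proof (cases "i < j")
      case True then show ?thesis using same0[OF True v(2)] 1 by (simp add: cv_def)
    next
      case False then have "j < i" using v by simp
      then show ?thesis using same0[OF _ v(1)] 1 by (simp add: cv_def) (metis Wsym)
    qed
  next
    case 2
    then have v: "i \<le> a" "j \<le> b" using assms unfolding valid_def by auto
    show ?thesis using w01[OF v] UV_ne 2 by (simp add: cv_def)
  next
    case 3
    then have v: "i \<le> a" "1 \<le> j" "j < a" using assms unfolding valid_def by auto
    have "W L (Uv (int i)) (Vv (int j))" using w02[OF v] by (rule Wsym)
    then show ?thesis using UV_ne 3 by (simp add: cv_def)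
  next
    case 4
    then have v: "i \<le> a" "1 \<le> j" "j < b" using assms unfolding valid_def by auto
    have "Uv (int i) \<noteq> Uv (int a + S * int j * int k)"
    proof
      assume "Uv (int i) = Uv (int a + S * int j * int k)"
      then have "int n dvd (int a + S * int j * int k - int i)" using U_eq dvd_sym_diff by blast
      moreover have "j \<le> b" "1 \<le> a - i + j" "1 \<le> i + b - j" using v by auto
      ultimately show False using dist_m[OF v(1)] by blast
    qed
    moreover have "W L (Uv (int i)) (Uv (int a + S * int j * int k))" using w03[OF v] by (rule Wsym)
    ultimately show ?thesis using 4 by (simp add: cv_def)
  next
    case 5
    then have v: "i \<le> b" "j \<le> b" "i \<noteq> j" using assms unfolding valid_def by auto
    show ?thesis
    proof (cases "i < j")
      case True then show ?thesis using same1[OF True v(2)] 5 by (simp add: cv_def)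
    next
      case False then have "j < i" using v by simp
      then show ?thesis using same1[OF _ v(1)] 5 by (simp add: cv_def) (metis Wsym)
    qed
  next
    case 6
    then have v: "i \<le> b" "1 \<le> j" "j < a" using assms unfolding valid_def by auto
    have "Vv (int a + S * int i * int k) \<noteq> Vv (int j)"
    proof
      assume "Vv (int a + S * int i * int k) = Vv (int j)"
      then have "int n dvd (int a + S * int i * int k - int j)" using V_eq by blast
      moreover have "j \<le> a" "1 \<le> a - j + i" "1 \<le> j + b - i" using v by auto
      ultimately show False using dist_m[OF _ v(1)] by blast
    qed
    moreover have "W L (Vv (int a + S * int i * int k)) (Vv (int j))" using w12[OF v] by (rule Wsym)
    ultimately show ?thesis using 6 by (simp add: cv_def)
  next
    case 7
    then have v: "i \<le> b" "1 \<le> j" "j < b" using assms unfolding valid_def by auto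
    have "W L (Vv (int a + S * int i * int k)) (Uv (int a + S * int j * int k))" using w13[OF v] by (rule Wsym)
    moreover have "Vv (int a + S * int i * int k) \<noteq> Uv (int a + S * int j * int k)" using UV_ne by metis
    ultimately show ?thesis using 7 by (simp add: cv_def)
  next
    case 8
    then have v: "1 \<le> i" "i < a" "1 \<le> j" "j < a" "i \<noteq> j" using assms unfolding valid_def by auto
    show ?thesis
    proof (cases "i < j")
      case True then show ?thesis using same2[OF v(1) True v(4)] 8 by (simp add: cv_def)
    next
      case False then have "j < i" using v by simp
      then show ?thesis using same2[OF v(3) _ v(2)] 8 by (simp add: cv_def) (metis Wsym)
    qed
  next
    case 9
    then have v: "1 \<le> i" "i < a" "1 \<le> j" "j < b" using assms unfolding valid_def by auto
    have "Vv (int i) \<noteq> Uv (int a + S * int j * int k)" using UV_ne by metis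
    then show ?thesis using w23[OF v] 9 by (simp add: cv_def)
  next
    case 10
    then have v: "1 \<le> i" "i < b" "1 \<le> j" "j < b" "i \<noteq> j" using assms unfolding valid_def by auto
    show ?thesis
    proof (cases "i < j")
      case True then show ?thesis using same3[OF v(1) True v(4)] 10 by (simp add: cv_def)
    next
      case False then have "j < i" using v by simp
      then show ?thesis using same3[OF v(3) _ v(2)] 10 by (simp add: cv_def) (metis Wsym)
    qed
  qed
qed

lemma pair: assumes "valid c i" "valid d j" "(c, i) \<noteq> (d, j)"
  shows "cv c i \<noteq> cv d j \<and> W L (cv c i) (cv d j)"
proof (cases "c \<le> d")
  case True then show ?thesis using pair_le assms by blast
next
  case False
  then have "cv d j \<noteq> cv c i \<and> W L (cv d j) (cv c i)" using pair_le assms by auto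
  then show ?thesis using Wsym by metis
qed

definition cls :: "nat \<Rightarrow> nat" where
  "cls x = (if x \<le> a then 0 else if x \<le> a + b + 1 then 1 else if x \<le> 2 * a + b then 2 else 3)"
definition par :: "nat \<Rightarrow> nat" where
  "par x = (if x \<le> a then x else if x \<le> a + b + 1 then x - (a + 1) else if x \<le> 2 * a + b then x - (a + b + 1) else x - (2 * a + b))"

lemma cls_valid: "x < 4 * r + 2 \<Longrightarrow> valid (cls x) (par x)"
  using Lab unfolding cls_def par_def valid_def by auto

lemma cls_inj: "x \<noteq> y \<Longrightarrow> (cls x, par x) \<noteq> (cls y, par y)"
  unfolding cls_def par_def by (auto split: if_splits)

lemma clique: "complete_hom (4 * r + 2) (pet_verts n) (power_adj (pet_verts n) (pet_adj n k) (2 * r + 1))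
                 (\<lambda>x. cv (cls x) (par x))"
  unfolding complete_hom_def power_adj_def
  using cv_in pair cls_valid cls_inj by blast

end



theorem theorem3:
  fixes n k u vp vm r :: nat and t :: int
  assumes "2 < 2 * k" and "2 * k \<le> n"
    and "\<exists>u' vp' vm' r' t'. ip_solution n k u' vp' vm' r' t'"
    and "\<forall>u' vp' vm' r' t'. ip_solution n k u' vp' vm' r' t' \<longrightarrow> \<not> ip_trivial u' vp' vm'"
    and "ip_solution n k u vp vm r t"
  shows "\<exists>f. complete_hom (4 * r + 2) (pet_verts n)
                (power_adj (pet_verts n) (pet_adj n k) (2 * r + 1)) f"
proof -
  have sol: "ip_solution n k u vp vm r t" by fact
  have feas: "int u + int k * (int vp - int vm) = t * int n" "u + vp + vm = 2 * r + 1"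
    using sol unfolding ip_solution_def ip_feasible_def by auto
  have mini: "\<And>u' vp' vm' r' t'. ip_feasible n k u' vp' vm' r' t' \<Longrightarrow> u + vp + vm \<le> u' + vp' + vm'"
    using sol unfolding ip_solution_def by blast
  have "\<not> ip_trivial u vp vm" using assms(4) sol by blast
  then have nt: "u \<noteq> 0" "vp + vm \<noteq> 0" unfolding ip_trivial_def by auto
  have npos: "0 < n" using assms(1,2) by linarith
  have vz: "vp = 0 \<or> vm = 0"
  proof (rule ccontr)
    assume "\<not> (vp = 0 \<or> vm = 0)"
    then have "1 \<le> vp" "1 \<le> vm" by auto
    then have r1: "1 \<le> r" using feas(2) nt by linarith
    have "ip_feasible n k u (vp - 1) (vm - 1) (r - 1) t"
      unfolding ip_feasible_def using feas \<open>1 \<le> vp\<close> \<open>1 \<le> vm\<close> r1 by (auto simp: of_nat_diff)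
    from mini[OF this] show False using \<open>1 \<le> vp\<close> \<open>1 \<le> vm\<close> by linarith
  qed
  define S :: int where "S = (if vm = 0 then 1 else -1)"
  define b where "b = vp + vm"
  have S: "S = 1 \<or> S = -1" by (simp add: S_def)
  have Sb: "S * int b = int vp - int vm" using vz by (auto simp: S_def b_def)
  have rel: "int n dvd (int u + S * int b * int k)"
    using feas(1) Sb by (metis dvd_triv_right mult.commute mult.left_commute)
  have minf: "int (2 * r + 1) \<le> c + \<bar>d\<bar>"
    if c: "0 \<le> c" and dv: "int n dvd (c + int k * d)" and od: "odd (c + \<bar>d\<bar>)" for c d :: int
  proof -
    obtain t' where t': "c + int k * d = int n * t'" using dv by (auto simp: dvd_def)
    have o2: "odd (nat (c + \<bar>d\<bar>))" using od c by (simp add: even_nat_iff)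
    then obtain r' where r': "nat (c + \<bar>d\<bar>) = 2 * r' + 1" by (metis oddE)
    have "ip_feasible n k (nat c) (nat d) (nat (-d)) r' t'"
      unfolding ip_feasible_def using t' r' c by (auto simp: algebra_simps)
    from mini[OF this] have "u + vp + vm \<le> nat c + nat d + nat (- d)" .
    then show ?thesis using feas(2) c by linarith
  qed
  interpret PS2 n k u b r S
    by unfold_locales (use npos S rel nt feas(2) minf in \<open>auto simp: b_def\<close>)
  show ?thesis using clique by blast
qed


end
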